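(* Let $q$ be a prime power, $v\ge 2$, and let $u\in\mathbb{Z}$, $m\ge0$ and $\Delta\ge1$ be integers. Let $\mathcal{C}$ be a set of points of $\mathrm{PG}(v-1,q)$ with $|\mathcal{C}\cap H|\equiv u\pmod{\Delta}$ for every hyperplane $H$ and with cardinality $n=u+m\Delta\ge0$. Then $$(q-1)\cdot\sum_{h\in\mathbb{Z},\,h\le m} h\,a_{u+h\Delta}=\left(u+m\Delta-uq\right)\cdot\frac{q^{v-1}}{\Delta}-m,$$ where $a_i$ denotes the number of hyperplanes $H$ with $|\mathcal{C}\cap H|=i$, and $a_{u+h\Delta}:=0$ whenever $u+h\Delta<0$.
   Context: $\mathrm{PG}(v-1,q)$ is the set of $1$-dimensional subspaces (points) of $\mathbb{F}_q^v$; hyperplanes are the $(v-1)$-dimensional subspaces of $\mathbb{F}_q^v$, and $\mathcal{C}\cap H$ is the set of points of $\mathcal{C}$ contained in $H$. *)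

theory Defs
  imports "HOL-Analysis.Analysis"
begin

text \<open>Projective geometry PG(v-1,q) over a finite field 'a (q = CARD('a)),
  realised on the coordinate space 'a^'n with v = CARD('n).\<close>

definition pg_points :: "('a::{finite,field}^'n) set set" where
  "pg_points = {S. vec.subspace S \<and> vec.dim S = 1}"

definition pg_hyperplanes :: "('a::{finite,field}^'n) set set" where
  "pg_hyperplanes = {H. vec.subspace H \<and> vec.dim H = CARD('n) - 1}"

definition pts_in :: "('a::{finite,field}^'n) set set \<Rightarrow> ('a^'n) set \<Rightarrow> ('a^'n) set set" where
  "pts_in C H = {P \<in> C. P \<subseteq> H}"

text \<open>a_i: number of hyperplanes H with |C \<inter> H| = i (automatically 0 for i < 0).\<close>
definition spectrum_a :: "('a::{finite,field}^'n) set set \<Rightarrow> int \<Rightarrow> nat" where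
  "spectrum_a C i = card {H \<in> pg_hyperplanes. int (card (pts_in C H)) = i}"

end

theory Submission
  imports Defs
begin


definition dotp :: "'a::field^'n \<Rightarrow> 'a^'n \<Rightarrow> 'a" where
  "dotp f x = (\<Sum>i\<in>UNIV. f$i * x$i)"

definition Kr :: "'a::field^'n \<Rightarrow> ('a^'n) set" where
  "Kr f = {x. dotp f x = 0}"

lemma dotp_comm: "dotp f x = dotp x (f::'a::field^'n)"
  unfolding dotp_def by (simp add: mult.commute)

lemma dotp_add: "dotp f (x + y) = dotp f x + dotp f (y::'a::field^'n)"
  unfolding dotp_def by (simp add: distrib_left sum.distrib)

lemma dotp_diff: "dotp f (x - y) = dotp f x - dotp f (y::'a::field^'n)"
  unfolding dotp_def by (simp add: right_diff_distrib sum_subtractf)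

lemma dotp_scale: "dotp f (c *s x) = c * dotp f (x::'a::field^'n)"
  unfolding dotp_def by (simp add: sum_distrib_left algebra_simps)

lemma dotp_scale_left: "dotp (c *s f) x = c * dotp f (x::'a::field^'n)"
  unfolding dotp_def by (simp add: sum_distrib_left algebra_simps)

lemma dotp_zero: "dotp 0 x = (0::'a::field)" "dotp f (0::'a::field^'n) = 0"
  unfolding dotp_def by simp_all

lemma dotp_axis: "dotp f (axis i c) = f$i * (c::'a::field)"
  unfolding dotp_def axis_def by (simp add: if_distrib sum.delta cong: if_cong)

lemma exists_w:
  assumes "f \<noteq> (0::'a::field^'n)" shows "\<exists>w. dotp f w = 1"
proof -
  obtain i where "f$i \<noteq> 0" using assms by (auto simp: vec_eq_iff)
  then show ?thesis by (intro exI[of _ "axis i (inverse (f$i))"]) (simp add: dotp_axis)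
qed

lemma Kr_subspace: "vec.subspace (Kr (f::'a::field^'n))"
  unfolding vec.subspace_def Kr_def by (simp add: dotp_add dotp_scale dotp_zero)

lemma dim_Kr:
  assumes "f \<noteq> (0::'a::field^'n)" shows "vec.dim (Kr f) = CARD('n) - 1"
proof -
  obtain w where w: "dotp f w = 1" using exists_w[OF assms] by blast
  obtain B where B: "B \<subseteq> Kr f" "vec.independent B" "Kr f \<subseteq> vec.span B" "card B = vec.dim (Kr f)"
    using vec.basis_exists by blast
  have spB: "vec.span B = Kr f"
    using B Kr_subspace vec.span_subspace by blast
  have wn: "w \<notin> Kr f" using w by (simp add: Kr_def)
  have fin: "finite B" using B(2) vec.finiteI_independent by blast
  have ind: "vec.independent (insert w B)"
    using vec.independent_insertI[of w B] B(2) wn spB by simp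
  have sp: "UNIV \<subseteq> vec.span (insert w B)"
  proof
    fix x :: "'a^'n"
    have "x - dotp f x *s w \<in> vec.span B"
      using spB by (simp add: Kr_def dotp_diff dotp_scale w)
    then show "x \<in> vec.span (insert w B)" using vec.span_breakdown_eq by blast
  qed
  have "vec.dim (UNIV :: ('a^'n) set) = card (insert w B)"
    by (rule vec.dim_unique[OF _ sp ind refl]) simp
  then have "CARD('n) = card B + 1" using fin wn B(1) vec_dim_card by (metis Suc_eq_plus1 card_insert_disjoint subsetD)
  then show ?thesis using B(4) by simp
qed

lemma Kr_eq:
  assumes f: "f \<noteq> (0::'a::field^'n)" and g: "g \<noteq> 0" and e: "Kr f = Kr g"
  shows "\<exists>c. c \<noteq> 0 \<and> g = c *s f"
proof -
  obtain w where w: "dotp f w = 1" using exists_w[OF f] by blast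
  have "\<And>x. dotp g x = dotp g w * dotp f x"
  proof -
    fix x
    have "x - dotp f x *s w \<in> Kr f" by (simp add: Kr_def dotp_diff dotp_scale w)
    then have "x - dotp f x *s w \<in> Kr g" using e by simp
    then have "dotp g (x - dotp f x *s w) = 0" by (simp add: Kr_def)
    then have "dotp g x - dotp f x * dotp g w = 0" by (simp only: dotp_diff dotp_scale)
    then show "dotp g x = dotp g w * dotp f x" by (simp add: algebra_simps)
  qed
  note dg = this
  have geq: "g = dotp g w *s f"
    unfolding vec_eq_iff
  proof
    fix i
    have "dotp g (axis i 1) = dotp g w * dotp f (axis i 1)" using dg .
    then show "g $ i = (dotp g w *s f) $ i" by (simp add: dotp_axis)
  qed
  moreover have "dotp g w \<noteq> 0" using g geq by auto
  ultimately show ?thesis by blast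
qed

lemma hyp_is_Kr:
  assumes H: "H \<in> (pg_hyperplanes :: ('a::{finite,field}^'n) set set)"
  shows "\<exists>f. f \<noteq> 0 \<and> H = Kr f"
proof -
  have sH: "vec.subspace H" and dH: "vec.dim H = CARD('n) - 1" using H by (auto simp: pg_hyperplanes_def)
  have "CARD('n) - 1 \<noteq> CARD('n)" using zero_less_card_finite[where 'a='n] by linarith
  then have "H \<noteq> UNIV" using dH vec_dim_card[where 'a='a and 'n='n] by auto
  then obtain w where wn: "w \<notin> H" by blast
  obtain B where B: "B \<subseteq> H" "vec.independent B" "H \<subseteq> vec.span B" "card B = vec.dim H"
    using vec.basis_exists by blast
  have spB: "vec.span B = H"
    using B sH vec.span_subspace by blast
  have fin: "finite B" using B(2) vec.finiteI_independent by blast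
  have ind: "vec.independent (insert w B)"
    using vec.independent_insertI[of w B] B(2) wn spB by simp
  have cd: "card (insert w B) = CARD('n)"
  proof -
    have "w \<notin> B" using wn B(1) by blast
    then have "card (insert w B) = card B + 1" using fin by simp
    then show ?thesis using B(4) dH zero_less_card_finite[where 'a='n] by linarith
  qed
  have sp: "UNIV \<subseteq> vec.span (insert w B)"
    by (rule vec.card_ge_dim_independent) (use ind cd vec_dim_card[where 'a='a and 'n='n] in auto)
  have ex: "\<exists>k. x - k *s w \<in> H" for x
    using sp spB vec.span_breakdown_eq by blast
  have uniq: "x - k *s w \<in> H \<Longrightarrow> x - l *s w \<in> H \<Longrightarrow> k = l" for x k l
  proof (rule ccontr)
    assume a: "x - k *s w \<in> H" "x - l *s w \<in> H" "k \<noteq> l"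
    then have "(x - l *s w) - (x - k *s w) \<in> H" using sH vec.subspace_diff by blast
    then have "(k - l) *s w \<in> H" by (simp add: vec.scale_left_diff_distrib)
    then have "inverse (k - l) *s ((k - l) *s w) \<in> H" using sH vec.subspace_scale by blast
    then have "(inverse (k - l) * (k - l)) *s w \<in> H" by (simp only: vector_smult_assoc)
    then show False using a(3) wn by simp
  qed
  define f where "f = (\<chi> i. THE k. axis i 1 - k *s w \<in> H)"
  have fi: "axis i 1 - f$i *s w \<in> H" for i
  proof -
    have "\<exists>!k. axis i 1 - k *s w \<in> H" using ex uniq by blast
    then show ?thesis unfolding f_def vec_lambda_beta by (rule theI')
  qed
  have key: "x - dotp f x *s w \<in> H" for x
  proof -
    have "(\<Sum>i\<in>UNIV. x$i *s (axis i 1 - f$i *s w)) \<in> H"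
      by (rule vec.subspace_sum[OF sH]) (rule vec.subspace_scale[OF sH fi])
    moreover have "(\<Sum>i\<in>UNIV. x$i *s (axis i 1 - f$i *s w)) =
        (\<Sum>i\<in>UNIV. x$i *s axis i 1) - (\<Sum>i\<in>UNIV. (f$i * x$i) *s w)"
      by (simp add: vec.scale_right_diff_distrib sum_subtractf vector_smult_assoc mult.commute)
    moreover have "\<dots> = x - dotp f x *s w"
      by (simp add: basis_expansion dotp_def vec.scale_sum_left)
    ultimately show ?thesis by simp
  qed
  have sub: "H \<subseteq> Kr f"
  proof
    fix x assume x: "x \<in> H"
    have "x - (x - dotp f x *s w) \<in> H" using key x sH vec.subspace_diff by blast
    then have "dotp f x *s w \<in> H" by simp
    show "x \<in> Kr f"
    proof (rule ccontr)
      assume "x \<notin> Kr f"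
      then have c: "dotp f x \<noteq> 0" by (simp add: Kr_def)
      have "inverse (dotp f x) *s (dotp f x *s w) \<in> H" using sH vec.subspace_scale \<open>dotp f x *s w \<in> H\<close> by blast
      then have "(inverse (dotp f x) * dotp f x) *s w \<in> H" by (simp only: vector_smult_assoc)
      then show False using c wn by simp
    qed
  qed
  have fnz: "f \<noteq> 0"
  proof
    assume "f = 0"
    then show False using key[of w] wn by (simp add: dotp_zero)
  qed
  have "H = Kr f"
    by (rule vec.subspace_dim_equal[OF sH Kr_subspace sub]) (simp add: dim_Kr[OF fnz] dH)
  then show ?thesis using fnz by blast
qed


lemma Kr_hyp: "f \<noteq> 0 \<Longrightarrow> Kr (f::'a::{finite,field}^'n) \<in> pg_hyperplanes"
  unfolding pg_hyperplanes_def using Kr_subspace dim_Kr by blast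

lemma hyp_eq: "(pg_hyperplanes :: ('a::{finite,field}^'n) set set) = Kr ` (UNIV - {0})"
proof (intro set_eqI iffI)
  fix H :: "('a^'n) set" assume "H \<in> pg_hyperplanes"
  then obtain f where "f \<noteq> 0" "H = Kr f" using hyp_is_Kr by blast
  then show "H \<in> Kr ` (UNIV - {0})" by blast
next
  fix H :: "('a^'n) set" assume "H \<in> Kr ` (UNIV - {0})"
  then show "H \<in> pg_hyperplanes" using Kr_hyp by blast
qed

lemma Kr_scale: "c \<noteq> 0 \<Longrightarrow> Kr (c *s f) = Kr (f::'a::field^'n)"
  unfolding Kr_def by (simp add: dotp_scale_left)

lemma fiber_card:
  assumes f: "f \<noteq> (0::'a::{finite,field}^'n)"
  shows "card {g. g \<noteq> 0 \<and> Kr g = Kr f} = CARD('a) - 1"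
proof -
  have "{g. g \<noteq> 0 \<and> Kr g = Kr f} = (\<lambda>c. c *s f) ` (UNIV - {0})"
  proof (intro set_eqI iffI)
    fix g assume "g \<in> {g. g \<noteq> 0 \<and> Kr g = Kr f}"
    then obtain c where "c \<noteq> 0" "g = c *s f" using Kr_eq[OF f] by force
    then show "g \<in> (\<lambda>c. c *s f) ` (UNIV - {0})" by blast
  next
    fix g assume "g \<in> (\<lambda>c. c *s f) ` (UNIV - {0})"
    then obtain c where c: "c \<noteq> 0" "g = c *s f" by blast
    have "g \<noteq> 0"
    proof
      assume "g = 0"
      then have "inverse c *s g = 0" by simp
      then have "f = 0" using c by (simp add: vector_smult_assoc)
      then show False using f by simp
    qed
    then show "g \<in> {g. g \<noteq> 0 \<and> Kr g = Kr f}" using c Kr_scale by auto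
  qed
  moreover have "inj_on (\<lambda>c. c *s f) (UNIV - {0})"
  proof (rule inj_onI)
    fix c d assume "c *s f = d *s f"
    moreover obtain i where "f$i \<noteq> 0" using f by (auto simp: vec_eq_iff)
    ultimately show "c = d" by (auto simp: vec_eq_iff)
  qed
  ultimately show ?thesis by (simp add: card_image card_Diff_singleton)
qed

lemma count_general:
  assumes S: "S \<subseteq> UNIV - {0::'a::{finite,field}^'n}"
    and cl: "\<And>f c. f \<in> S \<Longrightarrow> c \<noteq> 0 \<Longrightarrow> c *s f \<in> S"
  shows "card S = (CARD('a) - 1) * card (Kr ` S)"
proof -
  have "card S = (\<Sum>H\<in>Kr ` S. card {f \<in> S. Kr f = H})"
    using sum.group[of S "Kr ` S" Kr "\<lambda>_. 1::nat"] by simp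
  also have "\<dots> = (\<Sum>H\<in>Kr ` S. CARD('a) - 1)"
  proof (rule sum.cong[OF refl])
    fix H assume "H \<in> Kr ` S"
    then obtain f0 where f0: "f0 \<in> S" "H = Kr f0" by blast
    have "{f \<in> S. Kr f = H} = {g. g \<noteq> 0 \<and> Kr g = Kr f0}"
    proof (intro set_eqI iffI)
      fix g assume "g \<in> {g. g \<noteq> 0 \<and> Kr g = Kr f0}"
      then obtain c where "c \<noteq> 0" "g = c *s f0" using Kr_eq[of f0 g] f0 S by force
      then show "g \<in> {f \<in> S. Kr f = H}" using cl f0 \<open>g \<in> _\<close> by auto
    qed (use S f0 in auto)
    then show "card {f \<in> S. Kr f = H} = CARD('a) - 1" using fiber_card f0 S by auto
  qed
  finally show ?thesis by (simp add: mult.commute)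
qed

lemma card_Kr:
  assumes p: "p \<noteq> (0::'a::{finite,field}^'n)"
  shows "card (Kr p) = CARD('a) ^ (CARD('n) - 1)"
proof -
  obtain w where w: "dotp p w = 1" using exists_w[OF p] by blast
  have fib: "card {x. dotp p x = c} = card (Kr p)" for c
  proof -
    have "{x. dotp p x = c} = (\<lambda>x. x + c *s w) ` Kr p"
    proof (intro set_eqI iffI)
      fix x assume "x \<in> {x. dotp p x = c}"
      then have "x - c *s w \<in> Kr p" by (simp add: Kr_def dotp_diff dotp_scale w)
      then show "x \<in> (\<lambda>x. x + c *s w) ` Kr p" by (intro image_eqI[of _ _ "x - c *s w"]) auto
    qed (auto simp: Kr_def dotp_add dotp_scale w)
    moreover have "inj_on (\<lambda>x. x + c *s w) (Kr p)" by (rule inj_onI) simp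
    ultimately show ?thesis by (simp add: card_image)
  qed
  have "CARD('a^'n) = (\<Sum>c\<in>(UNIV::'a set). card {x. dotp p x = c})"
    using sum.group[of "UNIV::('a^'n) set" "UNIV::'a set" "dotp p" "\<lambda>_. 1::nat"] by simp
  also have "\<dots> = CARD('a) * card (Kr p)" by (simp add: fib)
  finally have e: "CARD('a) ^ CARD('n) = CARD('a) * card (Kr p)" by simp
  have "CARD('a) ^ CARD('n) = CARD('a) * CARD('a) ^ (CARD('n) - 1)"
    using zero_less_card_finite[where 'a='n] by (metis Suc_diff_1 power_Suc)
  then show ?thesis using e by simp
qed

lemma point_span:
  assumes "P \<in> (pg_points :: ('a::{finite,field}^'n) set set)"
  shows "\<exists>p. p \<noteq> 0 \<and> P = vec.span {p}"
proof -
  have sP: "vec.subspace P" and dP: "vec.dim P = 1" using assms by (auto simp: pg_points_def)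
  obtain B where B: "B \<subseteq> P" "vec.independent B" "P \<subseteq> vec.span B" "card B = vec.dim P"
    using vec.basis_exists by blast
  then obtain p where Bp: "B = {p}" using dP card_1_singletonE by metis
  have "p \<noteq> 0" using B(2) Bp vec.dependent_zero by blast
  moreover have "P = vec.span {p}"
    using B Bp sP vec.span_subspace by metis
  ultimately show ?thesis by blast
qed

lemma span_sub_Kr: "vec.span {p} \<subseteq> Kr f \<longleftrightarrow> dotp f (p::'a::field^'n) = 0"
proof
  assume "vec.span {p} \<subseteq> Kr f"
  then have "p \<in> Kr f" using vec.span_base by blast
  then show "dotp f p = 0" by (simp add: Kr_def)
next
  assume "dotp f p = 0"
  then have "{p} \<subseteq> Kr f" by (simp add: Kr_def)
  then show "vec.span {p} \<subseteq> Kr f" using vec.span_minimal Kr_subspace by blast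
qed

lemma card_hyp:
  "(CARD('a) - 1) * card (pg_hyperplanes :: ('a::{finite,field}^'n) set set) = CARD('a) ^ CARD('n) - 1"
proof -
  have "card (UNIV - {0::'a^'n}) = (CARD('a) - 1) * card (Kr ` (UNIV - {0::'a^'n}))"
    by (rule count_general) (auto simp: vec_eq_iff)
  then show ?thesis by (simp add: hyp_eq card_Diff_singleton)
qed

lemma card_hyp_through:
  assumes P: "P \<in> (pg_points :: ('a::{finite,field}^'n) set set)"
  shows "(CARD('a) - 1) * card {H \<in> (pg_hyperplanes :: ('a^'n) set set). P \<subseteq> H} = CARD('a) ^ (CARD('n) - 1) - 1"
proof -
  obtain p where p: "p \<noteq> 0" "P = vec.span {p}" using point_span[OF P] by blast
  let ?S = "Kr p - {0}"
  have eq: "{H \<in> (pg_hyperplanes :: ('a^'n) set set). P \<subseteq> H} = Kr ` ?S"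
  proof (intro set_eqI iffI)
    fix H assume "H \<in> {H \<in> (pg_hyperplanes :: ('a^'n) set set). P \<subseteq> H}"
    then obtain f where f: "f \<noteq> 0" "H = Kr f" "P \<subseteq> Kr f" using hyp_is_Kr by blast
    then have "dotp f p = 0" using p(2) span_sub_Kr by blast
    then have "f \<in> ?S" using f(1) by (simp add: Kr_def dotp_comm)
    then show "H \<in> Kr ` ?S" using f(2) by blast
  next
    fix H assume "H \<in> Kr ` ?S"
    then obtain f where f: "f \<in> ?S" "H = Kr f" by blast
    then have "dotp f p = 0" "f \<noteq> 0" by (auto simp: Kr_def dotp_comm)
    then show "H \<in> {H \<in> (pg_hyperplanes :: ('a^'n) set set). P \<subseteq> H}"
      using f(2) p(2) span_sub_Kr Kr_hyp by blast
  qed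
  have "card ?S = (CARD('a) - 1) * card (Kr ` ?S)"
    by (rule count_general) (auto simp: Kr_def dotp_scale vec_eq_iff)
  moreover have "card ?S = CARD('a) ^ (CARD('n) - 1) - 1"
    using card_Kr[OF p(1)] by (simp add: card_Diff_singleton Kr_def dotp_zero)
  ultimately show ?thesis using eq by simp
qed



lemma card_filter_sum: "finite A \<Longrightarrow> card {x \<in> A. Q x} = (\<Sum>x\<in>A. if Q x then 1 else (0::nat))"
  by (simp add: sum.inter_filter[symmetric])

theorem lemma5p3:
  fixes C :: "('a::{finite,field}^'n) set set"
    and u m \<Delta> :: int
  assumes v2: "CARD('n) \<ge> 2"
    and m0: "m \<ge> 0"
    and D1: "\<Delta> \<ge> 1"
    and CP: "C \<subseteq> pg_points"
    and div: "\<forall>H \<in> pg_hyperplanes. int (card (pts_in C H)) mod \<Delta> = u mod \<Delta>"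
    and n: "int (card C) = u + m * \<Delta>"
    and n0: "u + m * \<Delta> \<ge> 0"
  shows "(real CARD('a) - 1) *
           (\<Sum>h \<in> {h::int. h \<le> m \<and> 0 \<le> u + h * \<Delta>}. real_of_int h * real (spectrum_a C (u + h * \<Delta>)))
         = real_of_int (u + m * \<Delta> - u * int CARD('a)) * (real CARD('a) ^ (CARD('n) - 1) / real_of_int \<Delta>)
           - real_of_int m"
proof -
  define hyp where "hyp = (pg_hyperplanes :: ('a^'n) set set)"
  define Hs where "Hs = {h::int. h \<le> m \<and> 0 \<le> u + h * \<Delta>}"
  define k where "k H = int (card (pts_in C H))" for H
  define g where "g H = (k H - u) div \<Delta>" for H
  have finH: "finite hyp" by simp
  have finC: "finite C" by simp
  have kg: "k H = u + g H * \<Delta>" if "H \<in> hyp" for H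
  proof -
    have "k H mod \<Delta> = u mod \<Delta>" using div that by (simp add: k_def hyp_def)
    then have "\<Delta> dvd k H - u" by (simp add: mod_eq_dvd_iff)
    then show ?thesis by (simp add: g_def)
  qed
  have kle: "k H \<le> int (card C)" for H
    unfolding k_def pts_in_def using finC by (simp add: card_mono)
  have k0: "k H \<ge> 0" for H by (simp add: k_def)
  have gHs: "g H \<in> Hs" if "H \<in> hyp" for H
  proof -
    have "g H * \<Delta> \<le> m * \<Delta>" using kg[OF that] kle[of H] n by simp
    then have "g H \<le> m" using D1 by simp
    then show ?thesis using kg[OF that] k0[of H] by (simp add: Hs_def)
  qed
  have finHs: "finite Hs"
  proof (rule finite_subset)
    show "Hs \<subseteq> {min 0 (-u)..m}"
    proof
      fix h assume h: "h \<in> Hs"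
      have "min 0 (-u) \<le> h"
      proof (cases "h < 0")
        case True
        then have "h * \<Delta> \<le> h * 1" using D1 by (intro mult_left_mono_neg) auto
        then have "-u \<le> h" using h unfolding Hs_def by simp
        then show ?thesis by simp
      qed simp
      then show "h \<in> {min 0 (-u)..m}" using h by (simp add: Hs_def)
    qed
  qed simp
  have spec: "spectrum_a C (u + h * \<Delta>) = card {H \<in> hyp. g H = h}" for h
  proof -
    have "{H \<in> pg_hyperplanes. int (card (pts_in C H)) = u + h * \<Delta>} = {H \<in> hyp. g H = h}"
      using kg D1 by (auto simp: hyp_def k_def[symmetric])
    then show ?thesis by (simp add: spectrum_a_def)
  qed
  have "(\<Sum>h \<in> Hs. real_of_int h * real (spectrum_a C (u + h * \<Delta>)))
      = (\<Sum>h \<in> Hs. \<Sum>H \<in> {H \<in> hyp. g H = h}. real_of_int (g H))"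
    by (simp add: spec mult.commute)
  also have "\<dots> = (\<Sum>H \<in> hyp. real_of_int (g H))"
    using sum.group[of hyp Hs g "\<lambda>H. real_of_int (g H)"] finH finHs gHs by blast
  also have "\<dots> = (\<Sum>H \<in> hyp. (real_of_int (k H) - real_of_int u) / real_of_int \<Delta>)"
  proof (rule sum.cong[OF refl])
    fix H assume "H \<in> hyp"
    then have "real_of_int (k H) = real_of_int u + real_of_int (g H) * real_of_int \<Delta>"
      using kg by (metis of_int_add of_int_mult)
    then show "real_of_int (g H) = (real_of_int (k H) - real_of_int u) / real_of_int \<Delta>"
      using D1 by (simp add: field_simps)
  qed
  also have "\<dots> = ((\<Sum>H \<in> hyp. real_of_int (k H)) - real (card hyp) * real_of_int u) / real_of_int \<Delta>"
    by (simp add: sum_divide_distrib[symmetric] sum_subtractf)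
  finally have L: "(\<Sum>h \<in> Hs. real_of_int h * real (spectrum_a C (u + h * \<Delta>))) =
     ((\<Sum>H \<in> hyp. real_of_int (k H)) - real (card hyp) * real_of_int u) / real_of_int \<Delta>" .
  have dc: "(\<Sum>H \<in> hyp. card (pts_in C H)) = (\<Sum>P \<in> C. card {H \<in> hyp. P \<subseteq> H})"
  proof -
    have "(\<Sum>H \<in> hyp. card (pts_in C H)) = (\<Sum>H \<in> hyp. \<Sum>P \<in> C. if P \<subseteq> H then 1 else (0::nat))"
      unfolding pts_in_def using finC by (simp add: card_filter_sum)
    also have "\<dots> = (\<Sum>P \<in> C. \<Sum>H \<in> hyp. if P \<subseteq> H then 1 else (0::nat))"
      by (rule sum.swap)
    also have "\<dots> = (\<Sum>P \<in> C. card {H \<in> hyp. P \<subseteq> H})"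
      using finH by (simp add: card_filter_sum)
    finally show ?thesis .
  qed
  define q where "q = real CARD('a)"
  define Q where "Q = q ^ (CARD('n) - 1)"
  have q1: "CARD('a) \<ge> 1" using zero_less_card_finite[where 'a='a] by linarith
  have qQ: "q ^ CARD('n) = q * Q"
    unfolding Q_def using v2 by (metis Suc_diff_1 le_zero_eq not_less_eq_eq power_Suc zero_less_iff_neq_zero zero_neq_numeral)
  have through: "(q - 1) * real (card {H \<in> hyp. P \<subseteq> H}) = Q - 1" if "P \<in> C" for P
  proof -
    have pP: "P \<in> pg_points" using that CP by blast
    have "(CARD('a) - 1) * card {H \<in> hyp. P \<subseteq> H} = CARD('a) ^ (CARD('n) - 1) - 1"
      using card_hyp_through[OF pP] unfolding hyp_def .
    then have "real ((CARD('a) - 1) * card {H \<in> hyp. P \<subseteq> H}) = real (CARD('a) ^ (CARD('n) - 1) - 1)"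
      by (rule arg_cong)
    then show ?thesis using q1 unfolding q_def Q_def by (simp add: of_nat_diff one_le_power)
  qed
  have NH: "(q - 1) * real (card hyp) = q * Q - 1"
  proof -
    have "real ((CARD('a) - 1) * card hyp) = real (CARD('a) ^ CARD('n) - 1)"
      using card_hyp unfolding hyp_def by metis
    then show ?thesis using q1 qQ unfolding q_def by (simp add: of_nat_diff one_le_power)
  qed
  have S: "(q - 1) * (\<Sum>H \<in> hyp. real_of_int (k H)) = real (card C) * (Q - 1)"
  proof -
    have "(\<Sum>H \<in> hyp. real_of_int (k H)) = real (\<Sum>P \<in> C. card {H \<in> hyp. P \<subseteq> H})"
      unfolding k_def dc[symmetric] by simp
    then have "(q - 1) * (\<Sum>H \<in> hyp. real_of_int (k H)) = (\<Sum>P \<in> C. (q - 1) * real (card {H \<in> hyp. P \<subseteq> H}))"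
      by (simp add: sum_distrib_left)
    also have "\<dots> = (\<Sum>P \<in> C. Q - 1)" using through by simp
    finally show ?thesis by simp
  qed
  have nr: "real (card C) = real_of_int u + real_of_int m * real_of_int \<Delta>"
    using n by (metis of_int_add of_int_mult of_int_of_nat_eq)
  have D0: "real_of_int \<Delta> \<noteq> 0" using D1 by simp
  have "(q - 1) * (((\<Sum>H \<in> hyp. real_of_int (k H)) - real (card hyp) * real_of_int u) / real_of_int \<Delta>)
      = ((q - 1) * (\<Sum>H \<in> hyp. real_of_int (k H)) - ((q - 1) * real (card hyp)) * real_of_int u) / real_of_int \<Delta>"
    using D0 by (simp add: field_simps)
  also have "\<dots> = (real (card C) * (Q - 1) - (q * Q - 1) * real_of_int u) / real_of_int \<Delta>"
    by (simp add: S NH)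
  also have "\<dots> = (real_of_int u + real_of_int m * real_of_int \<Delta> - real_of_int u * q) * (Q / real_of_int \<Delta>) - real_of_int m"
    unfolding nr using D0 by (simp add: field_simps)
  finally show ?thesis unfolding L[unfolded Hs_def] q_def Q_def by simp
qed

end
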